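(* Let $m,s,t\in\mathbb{N}_0$ and let $e\in\mathbb{Z}$ with $-t\le e\le s$. Then \[ \begin{bmatrix}m\\ t\end{bmatrix}_q\begin{bmatrix}m+e\\ s\end{bmatrix}_q=\sum_{j\geq 0}q^{(s-j)(t+e-j)}\begin{bmatrix}t+e\\ j\end{bmatrix}_q\begin{bmatrix}s-e\\ s-j\end{bmatrix}_q\begin{bmatrix}m+j\\ s+t\end{bmatrix}_q \] as an identity of polynomials in $q$ (equivalently, for every $q\in\mathbb{C}$).
   Context: For $n\in\mathbb{N}_0$ the $q$-integer is $[n]_q=1+q+\dots+q^{n-1}=\frac{q^n-1}{q-1}$, the $q$-factorial is $[n]_q!=[n]_q[n-1]_q\cdots[1]_q$, and for $n,k\in\mathbb{N}_0$ with $k\le n$ the $q$-binomial coefficient is $\begin{bmatrix}n\\ k\end{bmatrix}_q=\frac{[n]_q!}{[k]_q![n-k]_q!}$, a polynomial in $q$. By convention $\begin{bmatrix}n\\ k\end{bmatrix}_q=0$ whenever $n<k$ (for $k\ge 0$; in particular whenever the top entry $n$ is negative). *)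

theory Defs
  imports "HOL-Computational_Algebra.Polynomial"
begin

definition qint :: "nat \<Rightarrow> complex poly" where
  "qint n = (\<Sum>i<n. monom 1 i)"

definition qfact :: "nat \<Rightarrow> complex poly" where
  "qfact n = (\<Prod>i\<in>{1..n}. qint i)"

definition qbinom :: "int \<Rightarrow> int \<Rightarrow> complex poly" where
  "qbinom n k = (if 0 \<le> k \<and> k \<le> n
     then qfact (nat n) div (qfact (nat k) * qfact (nat (n - k))) else 0)"

end

theory Submission
  imports Defs
begin

definition qq :: "complex poly" where "qq = [:0, 1:]"

fun G :: "nat \<Rightarrow> nat \<Rightarrow> complex poly" where
  "G n 0 = 1"
| "G 0 (Suc k) = 0"
| "G (Suc n) (Suc k) = G n k + qq ^ Suc k * G n (Suc k)"

lemma G_zero: "n < k \<Longrightarrow> G n k = 0"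
  by (induction n k rule: G.induct) auto

lemma qint_0[simp]: "qint 0 = 0" by (simp add: qint_def)
lemma qfact_0[simp]: "qfact 0 = 1" by (simp add: qfact_def)
lemma qq_pow: "qq ^ n = monom 1 n" by (simp add: monom_altdef qq_def)

lemma qint_Suc: "qint (Suc n) = qint n + qq ^ n"
  by (simp add: qint_def qq_pow)

lemma qint_add: "qint (a + b) = qint a + qq ^ a * qint b"
  by (induction b) (simp_all add: qint_Suc algebra_simps power_add)

lemma qint_nz: "qint (Suc n) \<noteq> 0"
proof -
  have "coeff (qint (Suc n)) 0 = 1"
    by (simp add: qint_def coeff_sum)
  then show ?thesis by auto
qed

lemma qfact_Suc: "qfact (Suc n) = qint (Suc n) * qfact n"
  by (simp add: qfact_def prod.nat_ivl_Suc' mult.commute)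

lemma qfact_nz: "qfact n \<noteq> 0"
  by (induction n) (simp_all add: qfact_Suc qint_nz)

lemma G_fact: "k \<le> n \<Longrightarrow> qfact n = G n k * qfact k * qfact (n - k)"
proof (induction n arbitrary: k)
  case 0
  then show ?case by simp
next
  case (Suc n)
  show ?case
  proof (cases k)
    case 0
    then show ?thesis by simp
  next
    case (Suc k')
    with Suc.prems have k': "k' \<le> n" by simp
    have A: "G n k' * qfact (Suc k') * qfact (n - k') = qint (Suc k') * qfact n"
      using Suc.IH[OF k'] by (simp add: qfact_Suc algebra_simps)
    have B: "qq ^ Suc k' * G n (Suc k') * qfact (Suc k') * qfact (n - k') = qq ^ Suc k' * qint (n - k') * qfact n"
    proof (cases "k' = n")
      case True
      then show ?thesis by (simp add: G_zero qint_def)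
    next
      case False
      then have "Suc k' \<le> n" using k' by simp
      from Suc.IH[OF this] have "qfact n = G n (Suc k') * qfact (Suc k') * qfact (n - Suc k')" .
      moreover have "n - k' = Suc (n - Suc k')" using False k' by simp
      ultimately show ?thesis by (simp add: qfact_Suc algebra_simps)
    qed
    have C: "qint (Suc n) = qint (Suc k') + qq ^ Suc k' * qint (n - k')"
      using qint_add[of "Suc k'" "n - k'"] k' by simp
    have "G (Suc n) k * qfact k * qfact (Suc n - k) =
       G n k' * qfact (Suc k') * qfact (n - k') + qq ^ Suc k' * G n (Suc k') * qfact (Suc k') * qfact (n - k')"
      by (simp add: Suc algebra_simps)
    also have "\<dots> = qint (Suc n) * qfact n" using A B C by (simp add: algebra_simps)
    finally show ?thesis by (simp add: qfact_Suc)
  qed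
qed

lemma qbinom_G: "qbinom (int a) (int b) = G a b"
proof (cases "b \<le> a")
  case True
  have "qfact a = G a b * (qfact b * qfact (a - b))" using G_fact[OF True] by (simp add: mult.assoc)
  moreover have "nat (int a - int b) = a - b" using True by simp
  ultimately show ?thesis using True qfact_nz
    by (simp add: qbinom_def)
next
  case False
  then show ?thesis by (simp add: qbinom_def G_zero)
qed

lemma G_cancel: "x * (qfact a * qfact b) = y * (qfact a * qfact b) \<Longrightarrow> x = y"
  using qfact_nz by (simp add: mult_right_cancel)

lemma G_sym: "k \<le> n \<Longrightarrow> G n (n - k) = G n k"
  apply (rule G_cancel[of _ k "n - k"])
  using G_fact[of k n] G_fact[of "n - k" n]
  by (simp add: algebra_simps)

lemma G_trin: "k \<le> j \<Longrightarrow> G n j * G j k = G n k * G (n - k) (j - k)"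
proof (cases "j \<le> n")
  case False
  assume "k \<le> j"
  show ?thesis
  proof (cases "k \<le> n")
    case True
    then have "n - k < j - k" using False \<open>k \<le> j\<close> by simp
    then show ?thesis by (simp add: G_zero)
  next
    case False
    then have "n < k" "n < j" using \<open>k \<le> j\<close> by simp_all
    then show ?thesis by (simp add: G_zero)
  qed
next
  case True
  assume kj: "k \<le> j"
  have e: "n - k - (j - k) = n - j" using kj True by simp
  have "(G n j * G j k) * (qfact k * qfact (j - k) * qfact (n - j)) = qfact n"
    using G_fact[OF kj] G_fact[OF True] by (simp add: algebra_simps)
  moreover have "(G n k * G (n - k) (j - k)) * (qfact k * qfact (j - k) * qfact (n - j)) = qfact n"
    using G_fact[of k n] G_fact[of "j - k" "n - k"] kj True e by (simp add: algebra_simps)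
  moreover have nz: "qfact k * qfact (j - k) * qfact (n - j) \<noteq> 0" by (simp add: qfact_nz)
  ultimately show ?thesis using mult_right_cancel[OF nz] by metis
qed

lemma G_vdm: "G (a + b) K = (\<Sum>i\<le>K. qq ^ (i * (b + i - K)) * G a i * G b (K - i))"
proof (induction b arbitrary: K)
  case 0
  have "(\<Sum>i\<le>K. qq ^ (i * (0 + i - K)) * G a i * G 0 (K - i)) = (\<Sum>i\<le>K. if i = K then G a i else 0)"
    by (rule sum.cong) (auto simp: G_zero)
  then show ?case by simp
next
  case (Suc b)
  show ?case
  proof (cases K)
    case 0
    then show ?thesis by simp
  next
    case (Suc K')
    have X: "(\<Sum>i\<le>K'. qq ^ (i * (Suc b + i - K) + (K - i)) * G a i * G b (K - i)) + qq ^ (K * Suc b) * G a K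
      = qq ^ K * G (a + b) K"
    proof -
      have "qq ^ K * G (a + b) K = (\<Sum>i\<le>K. qq ^ K * (qq ^ (i * (b + i - K)) * G a i * G b (K - i)))"
        using Suc.IH by (simp add: sum_distrib_left)
      also have "\<dots> = (\<Sum>i\<le>K'. qq ^ K * (qq ^ (i * (b + i - K)) * G a i * G b (K - i))) + qq ^ (K * Suc b) * G a K"
        by (simp add: Suc algebra_simps power_add)
      also have "(\<Sum>i\<le>K'. qq ^ K * (qq ^ (i * (b + i - K)) * G a i * G b (K - i))) =
         (\<Sum>i\<le>K'. qq ^ (i * (Suc b + i - K) + (K - i)) * G a i * G b (K - i))"
      proof (rule sum.cong)
        fix i assume "i \<in> {..K'}"
        then have i: "i \<le> K'" by simp
        show "qq ^ K * (qq ^ (i * (b + i - K)) * G a i * G b (K - i)) =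
          qq ^ (i * (Suc b + i - K) + (K - i)) * G a i * G b (K - i)"
        proof (cases "K \<le> b + i")
          case True
          have "Suc b + i - K = Suc (b + i - K)" using True by simp
          then have "i * (Suc b + i - K) + (K - i) = K + i * (b + i - K)" using i Suc by simp
          then show ?thesis by (simp add: power_add algebra_simps)
        next
          case False
          then show ?thesis by (simp add: G_zero)
        qed
      qed simp
      finally show ?thesis by simp
    qed
    have "(\<Sum>i\<le>K. qq ^ (i * (Suc b + i - K)) * G a i * G (Suc b) (K - i)) =
      (\<Sum>i\<le>K'. qq ^ (i * (Suc b + i - K)) * G a i * G (Suc b) (K - i)) + qq ^ (K * Suc b) * G a K"
      by (simp add: Suc)
    also have "(\<Sum>i\<le>K'. qq ^ (i * (Suc b + i - K)) * G a i * G (Suc b) (K - i)) =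
      (\<Sum>i\<le>K'. qq ^ (i * (b + i - K')) * G a i * G b (K' - i)) +
      (\<Sum>i\<le>K'. qq ^ (i * (Suc b + i - K) + (K - i)) * G a i * G b (K - i))"
      unfolding sum.distrib[symmetric]
    proof (rule sum.cong)
      fix i assume "i \<in> {..K'}"
      then have i: "i \<le> K'" by simp
      have Ki: "K - i = Suc (K' - i)" using i Suc by simp
      have e1: "i * (Suc b + i - K) = i * (b + i - K')" using Suc by simp
      have P: "G (Suc b) (K - i) = G b (K' - i) + qq ^ (K - i) * G b (K - i)"
        unfolding Ki by simp
      show "qq ^ (i * (Suc b + i - K)) * G a i * G (Suc b) (K - i) =
        qq ^ (i * (b + i - K')) * G a i * G b (K' - i) + qq ^ (i * (Suc b + i - K) + (K - i)) * G a i * G b (K - i)"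
        unfolding P e1 by (simp add: algebra_simps power_add)
    qed simp
    also have "(\<Sum>i\<le>K'. qq ^ (i * (b + i - K')) * G a i * G b (K' - i)) = G (a + b) K'"
      using Suc.IH by simp
    also have "G (a + b) K' + (\<Sum>i\<le>K'. qq ^ (i * (Suc b + i - K) + (K - i)) * G a i * G b (K - i)) + qq ^ (K * Suc b) * G a K
      = G (a + b) K' + qq ^ K * G (a + b) K" using X by (simp add: add.assoc)
    finally show ?thesis using Suc by (simp add: algebra_simps)
  qed
qed

lemma sum_rev_atMost: "(\<Sum>i\<le>(K::nat). f (K - i)) = (\<Sum>i\<le>K. (f i :: complex poly))"
  by (rule sum.reindex_bij_witness[where i="\<lambda>i. K - i" and j="\<lambda>i. K - i"]) auto

lemma G_vdm2: "G (a + b) K = (\<Sum>i\<le>K. qq ^ ((K - i) * (a - i)) * G a i * G b (K - i))"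
proof -
  have "G (a + b) K = (\<Sum>i\<le>K. qq ^ (i * (a + i - K)) * G b i * G a (K - i))"
    using G_vdm[of b a K] by (simp add: add.commute)
  also have "\<dots> = (\<Sum>i\<le>K. qq ^ ((K - i) * (a + (K - i) - K)) * G b (K - i) * G a (K - (K - i)))"
    by (rule sum_rev_atMost[symmetric])
  also have "\<dots> = (\<Sum>i\<le>K. qq ^ ((K - i) * (a - i)) * G a i * G b (K - i))"
    by (rule sum.cong) (auto simp: algebra_simps)
  finally show ?thesis .
qed

lemma inner:
  assumes "k \<le> s" "k \<le> n"
  shows "(\<Sum>j\<le>s. if k \<le> j then qq ^ ((s - j) * (n - j)) * G (n - k) (j - k) * G r (s - j) else 0)
     = G (n + r - k) (s - k)"
proof -
  have "(\<Sum>j\<le>s. if k \<le> j then qq ^ ((s - j) * (n - j)) * G (n - k) (j - k) * G r (s - j) else 0)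
      = (\<Sum>j\<in>{k..s}. qq ^ ((s - j) * (n - j)) * G (n - k) (j - k) * G r (s - j))"
  proof -
    have "{j. j \<le> s \<and> k \<le> j} = {k..s}" by auto
    then show ?thesis by (simp add: sum.If_cases Int_def)
  qed
  also have "\<dots> = (\<Sum>i\<in>{0..s-k}. qq ^ ((s - (i + k)) * (n - (i + k))) * G (n - k) (i + k - k) * G r (s - (i + k)))"
    using sum.shift_bounds_cl_nat_ivl[of "\<lambda>j. qq ^ ((s - j) * (n - j)) * G (n - k) (j - k) * G r (s - j)" 0 k "s - k"]
      assms by simp
  also have "\<dots> = (\<Sum>i\<le>s-k. qq ^ ((s - k - i) * (n - k - i)) * G (n - k) i * G r (s - k - i))"
    by (simp add: atLeast0AtMost algebra_simps)
  also have "\<dots> = G (n - k + r) (s - k)"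
    by (rule G_vdm2[symmetric])
  finally show ?thesis using assms by simp
qed

lemma main_nat:
  assumes tm: "t \<le> m" and nr: "n + r = s + t"
  shows "G m t * G (m - t + n) s =
    (\<Sum>j\<le>s. qq ^ ((s - j) * (n - j)) * G n j * G r (s - j) * G (m + j) (s + t))"
proof -
  define N where "N = s + t"
  define p where "p = m - t"
  have "(\<Sum>j\<le>s. qq ^ ((s - j) * (n - j)) * G n j * G r (s - j) * G (m + j) (s + t))
    = (\<Sum>j\<le>s. \<Sum>k\<le>N. qq ^ ((s - j) * (n - j)) * G n j * G r (s - j) *
          (qq ^ (k * (m + k - N)) * G j k * G m (N - k)))"
    by (simp add: G_vdm[of _ m] add.commute sum_distrib_left N_def)
  also have "\<dots> = (\<Sum>k\<le>N. \<Sum>j\<le>s. qq ^ ((s - j) * (n - j)) * G n j * G r (s - j) *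
          (qq ^ (k * (m + k - N)) * G j k * G m (N - k)))"
    by (rule sum.swap)
  also have "\<dots> = (\<Sum>k\<le>N. if k \<le> s then qq ^ (k * (m + k - N)) * G n k * G m (N - k) * G (N - k) (s - k) else 0)"
  proof (rule sum.cong)
    fix k assume "k \<in> {..N}"
    have "(\<Sum>j\<le>s. qq ^ ((s - j) * (n - j)) * G n j * G r (s - j) *
          (qq ^ (k * (m + k - N)) * G j k * G m (N - k))) =
       (\<Sum>j\<le>s. qq ^ (k * (m + k - N)) * G m (N - k) * G n k *
          (if k \<le> j then qq ^ ((s - j) * (n - j)) * G (n - k) (j - k) * G r (s - j) else 0))"
    proof (rule sum.cong)
      fix j assume "j \<in> {..s}"
      show "qq ^ ((s - j) * (n - j)) * G n j * G r (s - j) *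
          (qq ^ (k * (m + k - N)) * G j k * G m (N - k)) =
       qq ^ (k * (m + k - N)) * G m (N - k) * G n k *
          (if k \<le> j then qq ^ ((s - j) * (n - j)) * G (n - k) (j - k) * G r (s - j) else 0)"
      proof (cases "k \<le> j")
        case True
        show ?thesis using G_trin[OF True, of n] True by (simp add: algebra_simps)
      next
        case False
        then show ?thesis by (simp add: G_zero)
      qed
    qed simp
    also have "\<dots> = qq ^ (k * (m + k - N)) * G m (N - k) * G n k *
      (\<Sum>j\<le>s. if k \<le> j then qq ^ ((s - j) * (n - j)) * G (n - k) (j - k) * G r (s - j) else 0)"
      by (simp add: sum_distrib_left)
    also have "\<dots> = (if k \<le> s then qq ^ (k * (m + k - N)) * G n k * G m (N - k) * G (N - k) (s - k) else 0)"
    proof (cases "k \<le> s")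
      case True
      show ?thesis
      proof (cases "k \<le> n")
        case True
        then show ?thesis using inner[OF \<open>k \<le> s\<close> True, of r] \<open>k \<le> s\<close> nr
          by (simp add: N_def algebra_simps)
      next
        case False
        then show ?thesis by (simp add: G_zero)
      qed
    next
      case False
      then have "\<forall>j\<in>{..s}. \<not> k \<le> j" by auto
      then show ?thesis using False by simp
    qed
    finally show "(\<Sum>j\<le>s. qq ^ ((s - j) * (n - j)) * G n j * G r (s - j) *
          (qq ^ (k * (m + k - N)) * G j k * G m (N - k))) =
      (if k \<le> s then qq ^ (k * (m + k - N)) * G n k * G m (N - k) * G (N - k) (s - k) else 0)" .
  qed simp
  also have "\<dots> = (\<Sum>k\<le>s. qq ^ (k * (m + k - N)) * G n k * G m (N - k) * G (N - k) (s - k))"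
  proof -
    have "{x. x \<le> N \<and> x \<le> s} = {..s}" by (auto simp: N_def)
    then show ?thesis
      by (simp add: sum.If_cases Int_def)
  qed
  also have "\<dots> = (\<Sum>k\<le>s. G m t * (qq ^ (k * (p + k - s)) * G n k * G p (s - k)))"
  proof (rule sum.cong)
    fix k assume "k \<in> {..s}"
    then have k: "k \<le> s" by simp
    have e1: "G (N - k) (s - k) = G (N - k) t"
      using G_sym[of t "N - k"] k by (simp add: N_def)
    have e2: "G m (N - k) * G (N - k) t = G m t * G p (s - k)"
      using G_trin[of t "N - k" m] k by (simp add: N_def p_def)
    have e3: "m + k - N = p + k - s" using tm by (simp add: N_def p_def)
    show "qq ^ (k * (m + k - N)) * G n k * G m (N - k) * G (N - k) (s - k) =
      G m t * (qq ^ (k * (p + k - s)) * G n k * G p (s - k))"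
      using e2 unfolding e1 e3 by (simp add: algebra_simps)
  qed simp
  also have "\<dots> = G m t * G (n + p) s"
    by (simp add: G_vdm[of n p s] sum_distrib_left)
  finally show ?thesis by (simp add: p_def add.commute)
qed


theorem theorem1p1:
  fixes m s t :: nat and e :: int
  assumes "- int t \<le> e" and "e \<le> int s"
  shows "qbinom (int m) (int t) * qbinom (int m + e) (int s) =
    (\<Sum>j\<in>{j::nat. j \<le> s \<and> int j \<le> int t + e}.
       [:0, 1:] ^ nat ((int s - int j) * (int t + e - int j))
       * qbinom (int t + e) (int j) * qbinom (int s - e) (int s - int j)
       * qbinom (int m + int j) (int s + int t))"
proof -
  define n where "n = nat (int t + e)"
  define r where "r = nat (int s - e)"
  have n: "int n = int t + e" using assms by (simp add: n_def)
  have r: "int r = int s - e" using assms by (simp add: r_def)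
  have nr: "n + r = s + t" using n r by linarith
  define f where "f j = qq ^ ((s - j) * (n - j)) * G n j * G r (s - j) * G (m + j) (s + t)" for j
  have "(\<Sum>j\<in>{j::nat. j \<le> s \<and> int j \<le> int t + e}.
       [:0, 1:] ^ nat ((int s - int j) * (int t + e - int j))
       * qbinom (int t + e) (int j) * qbinom (int s - e) (int s - int j)
       * qbinom (int m + int j) (int s + int t)) = (\<Sum>j\<in>{j. j \<le> s \<and> j \<le> n}. f j)"
  proof (rule sum.cong)
    show "{j::nat. j \<le> s \<and> int j \<le> int t + e} = {j. j \<le> s \<and> j \<le> n}"
      using n by auto
  next
    fix j assume "j \<in> {j. j \<le> s \<and> j \<le> n}"
    then have j: "j \<le> s" "j \<le> n" by auto
    have e1: "nat ((int s - int j) * (int t + e - int j)) = (s - j) * (n - j)"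
    proof -
      have "(int s - int j) * (int t + e - int j) = int ((s - j) * (n - j))"
        using j n by (simp add: of_nat_diff)
      then show ?thesis by (simp only: nat_int)
    qed
    have e2: "qbinom (int t + e) (int j) = G n j" using qbinom_G[of n j] n by simp
    have e3: "qbinom (int s - e) (int s - int j) = G r (s - j)"
      using qbinom_G[of r "s - j"] r j by (simp add: of_nat_diff)
    have e4: "qbinom (int m + int j) (int s + int t) = G (m + j) (s + t)"
      using qbinom_G[of "m + j" "s + t"] by simp
    show "[:0, 1:] ^ nat ((int s - int j) * (int t + e - int j))
       * qbinom (int t + e) (int j) * qbinom (int s - e) (int s - int j)
       * qbinom (int m + int j) (int s + int t) = f j"
      unfolding e1 e2 e3 e4 f_def qq_def ..
  qed
  also have "\<dots> = (\<Sum>j\<le>s. f j)"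
  proof (rule sum.mono_neutral_left)
    show "\<forall>j\<in>{..s} - {j. j \<le> s \<and> j \<le> n}. f j = 0"
      by (auto simp: f_def G_zero)
  qed auto
  finally have R: "(\<Sum>j\<in>{j::nat. j \<le> s \<and> int j \<le> int t + e}.
       [:0, 1:] ^ nat ((int s - int j) * (int t + e - int j))
       * qbinom (int t + e) (int j) * qbinom (int s - e) (int s - int j)
       * qbinom (int m + int j) (int s + int t)) = (\<Sum>j\<le>s. f j)" .
  show ?thesis
  proof (cases "t \<le> m")
    case True
    have "int m + e = int (m - t + n)" using True n by simp
    then have "qbinom (int m) (int t) * qbinom (int m + e) (int s) = G m t * G (m - t + n) s"
      by (simp only: qbinom_G)
    also have "\<dots> = (\<Sum>j\<le>s. f j)" unfolding f_def by (rule main_nat[OF True nr])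
    finally show ?thesis using R by simp
  next
    case False
    have "(\<Sum>j\<le>s. f j) = 0"
      by (rule sum.neutral) (use False in \<open>auto simp: f_def G_zero\<close>)
    moreover have "qbinom (int m) (int t) = 0" using False by (simp add: qbinom_G G_zero)
    ultimately show ?thesis using R by simp
  qed
qed

end
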